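(* Let $n\ge 1$ and $1\le c\le n$. The minimum algorithm size (MAS) of the $c$-scattering problem ($c$SCT) for a swarm of $n$ robots under the SSYNC scheduler is exactly $c$: there is an algorithm of size $c$ that solves $c$SCT, and no algorithm of size smaller than $c$ solves it.
   Context: Model. A swarm consists of $n\ge1$ robots $r_1,\dots,r_n$, modeled as points in $\mathbb R^2$. Each robot $r_i$ has a local right-handed $x$-$y$ coordinate system $Z_i$ whose origin is always the robot's current position, with arbitrary (adversarially chosen, fixed) unit length and axis orientation; robots do not share coordinate systems. The configuration at time $t$ is the multiset $P_t$ of the $n$ robot positions (robots can detect multiplicities). A target function $\phi$ maps each finite multiset $P$ of points of $\mathbb R^2$ with $(0,0)\in P$ to a point $\phi(P)\in\mathbb R^2$. Time is discrete, $t=0,1,2,\dots$. Under the semi-synchronous (SSYNC) scheduler, at each time $t$ an adversary chooses a set of robots to activate; each activated robot $r_i$ observes $P_t$ expressed in $Z_i$, evaluates its target function on this multiset, and moves to the resulting point (interpreted in $Z_i$), arriving before time $t+1$; non-activated robots do not move. Schedules are fair: every robot is activated infinitely often. An algorithm of size $m$ is a set $\Phi$ of $m$ distinct target functions ($m\le n$); an assignment is a surjection $\mathcal A$ from the robots onto $\Phi$, robot $r_i$ using $\mathcal A(r_i)$. $\Phi$ solves a problem if for every assignment, every choice of local coordinate systems, every initial configuration and every fair SSYNC schedule, the resulting execution solves the problem. The MAS of a problem is the least $m$ such that some algorithm of size $m$ solves it, and $\infty$ if no algorithm of any size $m\le n$ solves it. For a multiset $P$, $\overline P$ denotes its set of distinct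 points. Problem. The $c$-scattering problem ($c$SCT): starting from any initial configuration, the execution must reach a configuration $P$ with $|\overline P|\ge c$. *)

theory Defs
  imports Complex_Main "HOL-Library.Multiset"
begin

text \<open>
  The plane R^2 is modelled by the complex numbers.
  A local right-handed coordinate system of robot i (arbitrary unit length and
  orientation, origin at the robot) is given by a nonzero complex number u i:
  a local point z corresponds to the global point (position of i) + u i * z.
  A target function maps a (finite) multiset of points to a point; only its values
  on multisets containing the origin matter.
\<close>

type_synonym target_fun = "complex multiset \<Rightarrow> complex"

definition config :: "nat \<Rightarrow> (nat \<Rightarrow> complex) \<Rightarrow> complex multiset" where
  "config n p = image_mset p (mset_set {0..<n})"

definition observe :: "complex \<Rightarrow> complex \<Rightarrow> complex multiset \<Rightarrow> complex multiset" where
  "observe x u P = image_mset (\<lambda>q. (q - x) / u) P"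

text \<open>SSYNC execution: A = assignment of target functions, u = local coordinate systems,
  p0 = initial positions, act t = set of robots activated at time t.\<close>
primrec exec :: "nat \<Rightarrow> (nat \<Rightarrow> target_fun) \<Rightarrow> (nat \<Rightarrow> complex) \<Rightarrow> (nat \<Rightarrow> complex)
                 \<Rightarrow> (nat \<Rightarrow> nat set) \<Rightarrow> nat \<Rightarrow> (nat \<Rightarrow> complex)" where
  "exec n A u p0 act 0 = p0"
| "exec n A u p0 act (Suc t) =
     (\<lambda>i. if i \<in> act t \<and> i < n
          then exec n A u p0 act t i
               + u i * A i (observe (exec n A u p0 act t i) (u i) (config n (exec n A u p0 act t)))
          else exec n A u p0 act t i)"

definition fair :: "nat \<Rightarrow> (nat \<Rightarrow> nat set) \<Rightarrow> bool" where
  "fair n act \<longleftrightarrow> (\<forall>i<n. \<forall>t. \<exists>t'\<ge>t. i \<in> act t')"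

definition is_algorithm :: "nat \<Rightarrow> nat \<Rightarrow> target_fun set \<Rightarrow> bool" where
  "is_algorithm n m \<Phi> \<longleftrightarrow> finite \<Phi> \<and> card \<Phi> = m \<and> 1 \<le> m \<and> m \<le> n \<and>
     (\<forall>\<phi>\<in>\<Phi>. \<forall>\<psi>\<in>\<Phi>. \<phi> \<noteq> \<psi> \<longrightarrow> (\<exists>P. 0 \<in># P \<and> \<phi> P \<noteq> \<psi> P))"

definition solves_SCT :: "nat \<Rightarrow> nat \<Rightarrow> target_fun set \<Rightarrow> bool" where
  "solves_SCT n c \<Phi> \<longleftrightarrow>
     (\<forall>A u p0 act. A ` {0..<n} = \<Phi> \<longrightarrow> (\<forall>i<n. u i \<noteq> 0) \<longrightarrow> fair n act \<longrightarrow>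
        (\<exists>t. c \<le> card (set_mset (config n (exec n A u p0 act t)))))"

end

theory Submission
  imports Defs
begin

lemma card_coarser:
  assumes "finite I" and "\<forall>i\<in>I. \<forall>j\<in>I. g i = g j \<longrightarrow> h i = h j"
  shows "card (h ` I) \<le> card (g ` I)"
    and "i\<in>I \<Longrightarrow> j\<in>I \<Longrightarrow> h i = h j \<Longrightarrow> g i \<noteq> g j \<Longrightarrow> card (h ` I) < card (g ` I)"
proof -
  define F where "F y = h (SOME i. i\<in>I \<and> g i = y)" for y
  have F: "F (g i) = h i" if "i \<in> I" for i
  proof -
    have "(SOME k. k\<in>I \<and> g k = g i) \<in> I \<and> g (SOME k. k\<in>I \<and> g k = g i) = g i"
      by (rule someI[of _ i]) (use that in auto)
    then show ?thesis unfolding F_def using assms(2) that by blast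
  qed
  have eq: "h ` I = F ` (g ` I)"
    using F by (auto simp: image_iff)
  show "card (h ` I) \<le> card (g ` I)" unfolding eq by (rule card_image_le) (use assms in auto)
  assume ij: "i\<in>I" "j\<in>I" "h i = h j" "g i \<noteq> g j"
  have "\<not> inj_on F (g ` I)"
    using ij F unfolding inj_on_def by (metis imageI)
  then have "card (F ` (g ` I)) \<noteq> card (g ` I)"
    using inj_on_iff_eq_card[of "g ` I" F] assms(1) by auto
  moreover have "card (F ` (g ` I)) \<le> card (g ` I)" by (rule card_image_le) (use assms in auto)
  ultimately show "card (h ` I) < card (g ` I)" unfolding eq by linarith
qed

definition mind :: "complex set \<Rightarrow> real" where
  "mind S = Min ((\<lambda>(a,b). cmod (a - b)) ` {(a,b). a\<in>S \<and> b\<in>S \<and> a\<noteq>b})"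

definition dlt :: "nat \<Rightarrow> complex multiset \<Rightarrow> real" where
  "dlt c P = (if 2 \<le> card (set_mset P) then mind (set_mset P) / (2 * real c) else 1)"

definition phi :: "nat \<Rightarrow> nat \<Rightarrow> target_fun" where
  "phi c k P = (if c \<le> card (set_mset P) then 0 else of_nat k * complex_of_real (dlt c P))"

lemma two_elems: "finite S \<Longrightarrow> 2 \<le> card S \<Longrightarrow> \<exists>a\<in>S. \<exists>b\<in>S. a \<noteq> b"
proof (rule ccontr)
  assume "finite S" "2 \<le> card S" "\<not> (\<exists>a\<in>S. \<exists>b\<in>S. a \<noteq> b)"
  then have "card S \<le> Suc 0" using card_le_Suc0_iff_eq by blast
  with \<open>2 \<le> card S\<close> show False by simp
qed

lemma mind_le:
  assumes "finite S" "a \<in> S" "b \<in> S" "a \<noteq> b"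
  shows "mind S \<le> cmod (a - b)"
proof -
  have "finite {(a,b). a\<in>S \<and> b\<in>S \<and> a\<noteq>b}"
    by (rule finite_subset[of _ "S \<times> S"]) (use assms in auto)
  then show ?thesis unfolding mind_def
    by (intro Min_le) (use assms in auto)
qed

lemma mind_pos:
  assumes "finite S" "2 \<le> card S"
  shows "0 < mind S"
proof -
  have fin: "finite {(a,b). a\<in>S \<and> b\<in>S \<and> a\<noteq>b}"
    by (rule finite_subset[of _ "S \<times> S"]) (use assms in auto)
  obtain a b where ab: "a \<in> S" "b \<in> S" "a \<noteq> b"
    using two_elems[OF assms(1,2)] by blast
  have ne: "{(a,b). a\<in>S \<and> b\<in>S \<and> a\<noteq>b} \<noteq> {}" using ab by auto
  have "mind S \<in> (\<lambda>(a,b). cmod (a - b)) ` {(a,b). a\<in>S \<and> b\<in>S \<and> a\<noteq>b}"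
    unfolding mind_def by (rule Min_in) (use fin ne in auto)
  then show ?thesis by auto
qed

lemma mind_image:
  assumes "finite S" "2 \<le> card S" "u \<noteq> 0"
  shows "mind ((\<lambda>q. (q - x) / u) ` S) = mind S / cmod u"
proof -
  let ?f = "\<lambda>q. (q - x) / u"
  let ?D = "(\<lambda>(a,b). cmod (a - b)) ` {(a,b). a\<in>S \<and> b\<in>S \<and> a\<noteq>b}"
  have fin: "finite {(a,b). a\<in>S \<and> b\<in>S \<and> a\<noteq>b}"
    by (rule finite_subset[of _ "S \<times> S"]) (use assms in auto)
  obtain a b where ab: "a \<in> S" "b \<in> S" "a \<noteq> b"
    using two_elems[OF assms(1,2)] by blast
  have ne: "?D \<noteq> {}" using ab by auto
  have fq: "?f p - ?f q = (p - q) / u" for p q by (simp add: diff_divide_distrib)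
  have inj: "?f p = ?f q \<longleftrightarrow> p = q" for p q using assms(3) by (auto simp: divide_cancel_right)
  have "(\<lambda>(a,b). cmod (a - b)) ` {(a,b). a\<in>?f ` S \<and> b\<in>?f ` S \<and> a\<noteq>b} = (\<lambda>d. d / cmod u) ` ?D"
  proof (rule set_eqI, rule iffI)
    fix z assume "z \<in> (\<lambda>(a,b). cmod (a - b)) ` {(a,b). a\<in>?f ` S \<and> b\<in>?f ` S \<and> a\<noteq>b}"
    then obtain p q where "p \<in> S" "q \<in> S" "?f p \<noteq> ?f q" "z = cmod (?f p - ?f q)" by auto
    then show "z \<in> (\<lambda>d. d / cmod u) ` ?D"
      unfolding fq norm_divide by (auto simp: image_iff inj intro!: bexI[of _ "(p,q)"])
  next
    fix z assume "z \<in> (\<lambda>d. d / cmod u) ` ?D"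
    then obtain p q where "p \<in> S" "q \<in> S" "p \<noteq> q" "z = cmod (p - q) / cmod u" by auto
    then show "z \<in> (\<lambda>(a,b). cmod (a - b)) ` {(a,b). a\<in>?f ` S \<and> b\<in>?f ` S \<and> a\<noteq>b}"
      unfolding image_iff
      by (intro bexI[of _ "(?f p, ?f q)"]) (use assms(3) in \<open>auto simp: fq norm_divide inj\<close>)
  qed
  then have "mind (?f ` S) = Min ((\<lambda>d. d / cmod u) ` ?D)" unfolding mind_def by simp
  also have "\<dots> = Min ?D / cmod u"
    by (rule mono_Min_commute[symmetric]) (use fin ne assms(3) in \<open>auto simp: mono_def divide_right_mono\<close>)
  finally show ?thesis unfolding mind_def .
qed


lemma set_observe:
  "set_mset (observe x u P) = (\<lambda>q. (q - x) / u) ` set_mset P"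
  by (simp add: observe_def)

lemma card_observe:
  assumes "u \<noteq> 0"
  shows "card (set_mset (observe x u P)) = card (set_mset P)"
proof -
  have "inj_on (\<lambda>q. (q - x) / u) (set_mset P)"
    using assms by (auto simp: inj_on_def)
  then show ?thesis by (simp add: set_observe card_image)
qed

lemma disp_big:
  assumes "u \<noteq> 0" "c \<le> card (set_mset P)"
  shows "u * phi c k (observe x u P) = 0"
  using assms by (simp add: phi_def card_observe)

lemma disp_zero: "u * phi c 0 (observe x u P) = 0"
  by (simp add: phi_def)

lemma disp_one:
  assumes "u \<noteq> 0" "card (set_mset P) < c" "card (set_mset P) = 1"
  shows "u * phi c k (observe x u P) = u * of_nat k"
  using assms by (simp add: phi_def card_observe dlt_def)

lemma disp_two:
  assumes "u \<noteq> 0" "card (set_mset P) < c" "2 \<le> card (set_mset P)"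
  shows "cmod (u * phi c k (observe x u P)) = real k * mind (set_mset P) / (2 * real c)"
proof -
  have m: "mind (set_mset (observe x u P)) = mind (set_mset P) / cmod u"
    unfolding set_observe by (rule mind_image) (use assms in auto)
  have mp: "0 < mind (set_mset P)" using mind_pos assms by auto
  have "u * phi c k (observe x u P) = u * (of_nat k * complex_of_real (mind (set_mset P) / cmod u / (2 * real c)))"
    using assms by (simp add: phi_def card_observe dlt_def m)
  also have "cmod \<dots> = real k * mind (set_mset P) / (2 * real c)"
  proof -
    have "cmod (u * (of_nat k * complex_of_real (mind (set_mset P) / cmod u / (2 * real c))))
        = cmod u * (real k * (mind (set_mset P) / cmod u / (2 * real c)))"
      unfolding norm_mult norm_of_nat norm_of_real using mp by (simp add: abs_of_nonneg)
    also have "\<dots> = real k * mind (set_mset P) / (2 * real c)"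
      using assms(1) by (simp add: field_simps)
    finally show ?thesis .
  qed
  finally show ?thesis .
qed

lemma set_config: "set_mset (config n p) = p ` {0..<n}"
  by (simp add: config_def)


context
  fixes n c :: nat and A :: "nat \<Rightarrow> target_fun" and u p0 :: "nat \<Rightarrow> complex"
    and act :: "nat \<Rightarrow> nat set" and K :: "nat \<Rightarrow> nat"
  assumes c1: "1 \<le> c" and n1: "1 \<le> n" and uz: "\<forall>i<n. u i \<noteq> 0"
    and AK: "\<forall>i<n. A i = phi c (K i) \<and> K i < c"
    and KS: "K ` {0..<n} = {0..<c}"
begin

abbreviation pos where "pos \<equiv> exec n A u p0 act"
abbreviation cnt where "cnt t \<equiv> card (pos t ` {0..<n})"

definition E where
  "E t i = (if i \<in> act t then u i * phi c (K i) (observe (pos t i) (u i) (config n (pos t))) else 0)"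

lemma step: "i < n \<Longrightarrow> pos (Suc t) i = pos t i + E t i"
  using AK by (simp add: E_def)

lemma cnt_pos: "1 \<le> cnt t"
proof -
  have "pos t 0 \<in> pos t ` {0..<n}" using n1 by auto
  then show ?thesis by (metis One_nat_def Suc_leI card_gt_0_iff empty_iff finite_atLeastLessThan finite_imageI)
qed

lemma E_big: "c \<le> cnt t \<Longrightarrow> i < n \<Longrightarrow> E t i = 0"
  using uz disp_big[of "u i" c "config n (pos t)" "K i" "pos t i"] by (simp add: E_def set_config)

lemma E_two: "cnt t < c \<Longrightarrow> 2 \<le> cnt t \<Longrightarrow> i < n \<Longrightarrow>
   cmod (E t i) = (if i \<in> act t then real (K i) * mind (pos t ` {0..<n}) / (2 * real c) else 0)"
  using uz disp_two[of "u i" "config n (pos t)" c "K i" "pos t i"] by (simp add: E_def set_config)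

lemma E_one: "cnt t < c \<Longrightarrow> cnt t = 1 \<Longrightarrow> i < n \<Longrightarrow>
   E t i = (if i \<in> act t then u i * of_nat (K i) else 0)"
  using uz disp_one[of "u i" "config n (pos t)" c "K i" "pos t i"] by (simp add: E_def set_config)

lemma nomerge:
  assumes ij: "i < n" "j < n" and eq: "pos (Suc t) i = pos (Suc t) j"
  shows "pos t i = pos t j"
proof (rule ccontr)
  assume ne: "pos t i \<noteq> pos t j"
  let ?S = "pos t ` {0..<n}"
  have "pos t i \<in> ?S" "pos t j \<in> ?S" using ij by auto
  then have c2: "2 \<le> cnt t"
    using ne by (metis One_nat_def card_le_Suc0_iff_eq finite_atLeastLessThan finite_imageI not_less_eq_eq numeral_2_eq_2)
  show False
  proof (cases "c \<le> cnt t")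
    case True
    then show False using eq ne E_big ij step by auto
  next
    case False
    then have lt: "cnt t < c" by simp
    define m where "m = mind ?S"
    have mp: "0 < m" unfolding m_def using mind_pos c2 by auto
    have ml: "m \<le> cmod (pos t i - pos t j)"
      unfolding m_def using ij ne by (intro mind_le) auto
    have bnd: "cmod (E t k) < m / 2" if "k < n" for k
    proof -
      have "real (K k) < real c" using AK that by auto
      then have "real (K k) * m / (2 * real c) < real c * m / (2 * real c)"
        using mp c1 by (intro divide_strict_right_mono mult_strict_right_mono) auto
      also have "\<dots> = m / 2" using c1 by simp
      finally show ?thesis using E_two[OF lt c2 that] mp unfolding m_def[symmetric] by auto
    qed
    have "pos t i - pos t j = E t j - E t i" using eq step ij by (simp add: algebra_simps)
    then have "cmod (pos t i - pos t j) \<le> cmod (E t j) + cmod (E t i)"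
      by (metis norm_triangle_ineq4)
    then show False using bnd[OF ij(1)] bnd[OF ij(2)] ml by linarith
  qed
qed

lemma nomerge_multi:
  assumes "t \<le> s" "i < n" "j < n" "pos s i = pos s j"
  shows "pos t i = pos t j"
  using assms(1,4)
proof (induction s rule: dec_induct)
  case base then show ?case .
next
  case (step s) then show ?case using nomerge assms(2,3) by blast
qed

lemma cnt_strict:
  assumes "t \<le> s" "i < n" "j < n" "pos t i = pos t j" "pos s i \<noteq> pos s j"
  shows "cnt t < cnt s"
proof -
  have h: "\<forall>i\<in>{0..<n}. \<forall>j\<in>{0..<n}. pos s i = pos s j \<longrightarrow> pos t i = pos t j"
    using nomerge_multi[OF assms(1)] by (meson atLeastLessThan_iff)
  show ?thesis by (rule card_coarser(2)[OF _ h]) (use assms in simp_all)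
qed

lemma cnt_mono:
  assumes "t \<le> s" shows "cnt t \<le> cnt s"
proof -
  have h: "\<forall>i\<in>{0..<n}. \<forall>j\<in>{0..<n}. pos s i = pos s j \<longrightarrow> pos t i = pos t j"
    using nomerge_multi[OF assms(1)] by (meson atLeastLessThan_iff)
  show ?thesis by (rule card_coarser(1)[OF _ h]) simp
qed

lemma separate:
  assumes ij: "i < n" "j < n" and eq: "pos t i = pos t j" and act: "i \<in> act t"
    and lt: "cnt t < c" and Ki: "1 \<le> K i" and Kij: "K i \<noteq> K j"
    and cs: "K j = 0 \<or> 2 \<le> cnt t"
  shows "pos (Suc t) i \<noteq> pos (Suc t) j"
proof -
  have "E t i \<noteq> E t j"
  proof (cases "2 \<le> cnt t")
    case True
    define m where "m = mind (pos t ` {0..<n})"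
    have mp: "0 < m" unfolding m_def using mind_pos True by auto
    have ni: "cmod (E t i) = real (K i) * m / (2 * real c)"
      using E_two[OF lt True ij(1)] act unfolding m_def by simp
    have nj: "cmod (E t j) = (if j \<in> act t then real (K j) * m / (2 * real c) else 0)"
      using E_two[OF lt True ij(2)] unfolding m_def by simp
    have "real (K i) * m / (2 * real c) \<noteq> real (K j) * m / (2 * real c)"
      using mp c1 Kij by (auto simp: field_simps)
    moreover have "real (K i) * m / (2 * real c) \<noteq> 0" using mp c1 Ki by auto
    ultimately show ?thesis using ni nj by (metis)
  next
    case False
    then have one: "cnt t = 1" using cnt_pos[of t] by linarith
    have "K j = 0" using cs False by simp
    then have "E t j = 0" using E_one[OF lt one ij(2)] by simp
    moreover have "E t i \<noteq> 0" using E_one[OF lt one ij(1)] act uz ij Ki by auto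
    ultimately show ?thesis by simp
  qed
  then show ?thesis using step ij eq by simp
qed

lemma find_pair:
  assumes lt: "cnt t < c"
  obtains i j where "i < n" "j < n" "pos t i = pos t j" "1 \<le> K i" "K i \<noteq> K j"
    "K j = 0 \<or> 2 \<le> cnt t"
proof (cases "cnt t = 1")
  case True
  then have c2: "2 \<le> c" using lt by simp
  have "1 \<in> K ` {0..<n}" "0 \<in> K ` {0..<n}" using KS c2 by auto
  then obtain i j where ij: "i < n" "j < n" "K i = 1" "K j = 0" by auto
  obtain x where x: "pos t ` {0..<n} = {x}" using True card_1_singletonE by blast
  have "pos t i = pos t j" using x ij(1,2)
    by (metis atLeastLessThan_iff imageI le0 singletonD)
  then show ?thesis using that ij by simp
next
  case False
  then have c2: "2 \<le> cnt t" using cnt_pos[of t] by linarith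
  have "\<exists>i\<in>{0..<n}. \<exists>j\<in>{0..<n}. pos t i = pos t j \<and> K i \<noteq> K j"
  proof (rule ccontr)
    assume "\<not> ?thesis"
    then have "\<forall>i\<in>{0..<n}. \<forall>j\<in>{0..<n}. pos t i = pos t j \<longrightarrow> K i = K j" by blast
    from card_coarser(1)[OF _ this] have "card (K ` {0..<n}) \<le> cnt t" by simp
    then show False using KS lt by simp
  qed
  then obtain i j where ij: "i < n" "j < n" "pos t i = pos t j" "K i \<noteq> K j" by auto
  show ?thesis
  proof (cases "1 \<le> K i")
    case True then show ?thesis using that ij c2 by blast
  next
    case False
    then have "1 \<le> K j" using ij by simp
    then show ?thesis using that[of j i] ij c2 by auto
  qed
qed

lemma progress:
  assumes fair: "fair n act" and lt: "cnt t < c"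
  shows "\<exists>s. cnt t < cnt s"
proof -
  obtain i j where ij: "i < n" "j < n" "pos t i = pos t j" "1 \<le> K i" "K i \<noteq> K j"
    "K j = 0 \<or> 2 \<le> cnt t" using find_pair[OF lt] by blast
  obtain t' where t': "t \<le> t'" "i \<in> act t'" using fair ij(1) unfolding fair_def by blast
  show ?thesis
  proof (cases "pos t' i = pos t' j")
    case False then show ?thesis using cnt_strict[OF t'(1) ij(1,2,3)] by blast
  next
    case True
    show ?thesis
    proof (cases "c \<le> cnt t'")
      case True then show ?thesis using lt by (intro exI[of _ t']) simp
    next
      case False
      have cs: "K j = 0 \<or> 2 \<le> cnt t'" using ij(6) cnt_mono[OF t'(1)] by linarith
      have "pos (Suc t') i \<noteq> pos (Suc t') j"
        using separate[OF ij(1,2) True t'(2) _ ij(4,5) cs] False by simp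
      moreover have "t \<le> Suc t'" using t'(1) by simp
      ultimately show ?thesis using cnt_strict[OF _ ij(1,2,3)] by blast
    qed
  qed
qed

lemma reach:
  assumes fair: "fair n act"
  shows "\<exists>t. c \<le> cnt t"
proof (rule ccontr)
  assume "\<not> ?thesis"
  then have all: "cnt t < c" for t by (simp add: not_le)
  have "\<exists>t. k \<le> cnt t" for k
  proof (induction k)
    case 0 then show ?case by simp
  next
    case (Suc k)
    then obtain t where "k \<le> cnt t" by blast
    moreover obtain s where "cnt t < cnt s" using progress[OF fair all] by blast
    ultimately show ?case by (intro exI[of _ s]) simp
  qed
  then show False using all by (meson not_le)
qed

end

lemma phi_single: "2 \<le> c \<Longrightarrow> phi c k {#0#} = of_nat k"
  by (simp add: phi_def dlt_def)

lemma phi_inj: "inj_on (phi c) {0..<c}"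
proof (rule inj_onI)
  fix k k' assume kk: "k \<in> {0..<c}" "k' \<in> {0..<c}" "phi c k = phi c k'"
  show "k = k'"
  proof (cases "2 \<le> c")
    case True
    then have "(of_nat k :: complex) = of_nat k'" using kk(3) phi_single by metis
    then show ?thesis by simp
  next
    case False then show ?thesis using kk by auto
  qed
qed

lemma part1:
  assumes "1 \<le> n" "1 \<le> c" "c \<le> n"
  shows "is_algorithm n c (phi c ` {0..<c}) \<and> solves_SCT n c (phi c ` {0..<c})"
proof
  show "is_algorithm n c (phi c ` {0..<c})"
    unfolding is_algorithm_def
  proof (intro conjI ballI impI)
    show "card (phi c ` {0..<c}) = c" using phi_inj by (simp add: card_image)
    fix \<phi> \<psi> assume "\<phi> \<in> phi c ` {0..<c}" "\<psi> \<in> phi c ` {0..<c}" "\<phi> \<noteq> \<psi>"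
    note ne = \<open>\<phi> \<noteq> \<psi>\<close>
    obtain k where k: "k < c" "\<phi> = phi c k" using \<open>\<phi> \<in> phi c ` {0..<c}\<close> by auto
    obtain k' where k': "k' < c" "\<psi> = phi c k'" using \<open>\<psi> \<in> phi c ` {0..<c}\<close> by auto
    have "k \<noteq> k'"
    proof
      assume "k = k'" then have "\<phi> = \<psi>" using k(2) k'(2) by simp
      then show False using ne by contradiction
    qed
    note kk = k(1) k'(1) k(2) k'(2) this
    then have "2 \<le> c" by linarith
    then have "\<phi> {#0#} \<noteq> \<psi> {#0#}" using kk by (simp add: phi_single)
    then show "\<exists>P. 0 \<in># P \<and> \<phi> P \<noteq> \<psi> P" by (intro exI[of _ "{#0#}"]) simp
  next
    show "finite (phi c ` {0..<c})" by simp
  next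
    show "1 \<le> c" by (rule assms(2))
  next
    show "c \<le> n" by (rule assms(3))
  qed
  show "solves_SCT n c (phi c ` {0..<c})"
    unfolding solves_SCT_def
  proof (intro allI impI)
    fix A :: "nat \<Rightarrow> target_fun" and u p0 :: "nat \<Rightarrow> complex" and act :: "nat \<Rightarrow> nat set"
    assume AS: "A ` {0..<n} = phi c ` {0..<c}" and uz: "\<forall>i<n. u i \<noteq> 0" and fair: "fair n act"
    define K where "K i = (SOME k. k < c \<and> A i = phi c k)" for i
    have AK: "\<forall>i<n. A i = phi c (K i) \<and> K i < c"
    proof (intro allI impI)
      fix i assume "i < n"
      then have "A i \<in> phi c ` {0..<c}" using AS by auto
      then have "\<exists>k. k < c \<and> A i = phi c k" by auto
      from someI_ex[OF this] show "A i = phi c (K i) \<and> K i < c" unfolding K_def by auto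
    qed
    have KS: "K ` {0..<n} = {0..<c}"
    proof
      show "K ` {0..<n} \<subseteq> {0..<c}" using AK by auto
      show "{0..<c} \<subseteq> K ` {0..<n}"
      proof
        fix k assume k: "k \<in> {0..<c}"
        then have "phi c k \<in> A ` {0..<n}" using AS by auto
        then obtain i where i: "i < n" "A i = phi c k" by auto
        then have "phi c (K i) = phi c k" "K i < c" using AK by auto
        moreover have "K i \<in> {0..<c}" using \<open>K i < c\<close> by simp
        ultimately have "K i = k" using inj_onD[OF phi_inj _ _ k] by blast
        then show "k \<in> K ` {0..<n}" using i by auto
      qed
    qed
    from reach[OF assms(2,1) uz AK KS fair]
    obtain t where "c \<le> card (exec n A u p0 act t ` {0..<n})" ..
    then show "\<exists>t. c \<le> card (set_mset (config n (exec n A u p0 act t)))"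
      unfolding set_config by (rule exI)
  qed
qed

lemma part2:
  assumes mc: "m < c" and alg: "is_algorithm n m \<Phi>"
  shows "\<not> solves_SCT n c \<Phi>"
proof
  assume sol: "solves_SCT n c \<Phi>"
  have fin: "finite \<Phi>" and cm: "card \<Phi> = m" and m1: "1 \<le> m" and mn: "m \<le> n"
    using alg unfolding is_algorithm_def by auto
  obtain f where f: "bij_betw f {0..<m} \<Phi>" using ex_bij_betw_nat_finite[OF fin] cm by auto
  define A where "A i = f (min i (m - 1))" for i
  have AS: "A ` {0..<n} = \<Phi>"
  proof
    show "A ` {0..<n} \<subseteq> \<Phi>"
      using f m1 unfolding A_def bij_betw_def by auto
    show "\<Phi> \<subseteq> A ` {0..<n}"
    proof
      fix \<phi> assume "\<phi> \<in> \<Phi>"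
      then obtain k where k: "k < m" "\<phi> = f k" using f unfolding bij_betw_def by auto
      moreover have "min k (m - 1) = k" using k(1) by linarith
      ultimately have "A k = \<phi>" unfolding A_def by simp
      moreover have "k \<in> {0..<n}" using k mn by simp
      ultimately show "\<phi> \<in> A ` {0..<n}" by (metis imageI)
    qed
  qed
  let ?u = "\<lambda>_::nat. (1::complex)" and ?p = "\<lambda>_::nat. (0::complex)" and ?a = "\<lambda>_::nat. (UNIV::nat set)"
  have fair: "fair n ?a" unfolding fair_def by blast
  have same: "\<forall>i<n. \<forall>j<n. A i = A j \<longrightarrow> exec n A ?u ?p ?a t i = exec n A ?u ?p ?a t j" for t
  proof (induction t)
    case 0 then show ?case by simp
  next
    case (Suc t)
    show ?case
    proof (intro allI impI)
      fix i j assume ij: "i < n" "j < n" "A i = A j"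
      have e: "exec n A ?u ?p ?a t i = exec n A ?u ?p ?a t j" using Suc.IH ij by blast
      show "exec n A ?u ?p ?a (Suc t) i = exec n A ?u ?p ?a (Suc t) j"
        using ij e by (simp only: exec.simps) simp
    qed
  qed
  have u1: "\<forall>i<n. ?u i \<noteq> 0" by simp
  have "\<exists>t. c \<le> card (set_mset (config n (exec n A ?u ?p ?a t)))"
  proof -
    have "\<forall>A u p0 act. A ` {0..<n} = \<Phi> \<longrightarrow> (\<forall>i<n. u i \<noteq> 0) \<longrightarrow> fair n act \<longrightarrow>
        (\<exists>t. c \<le> card (set_mset (config n (exec n A u p0 act t))))"
      using sol unfolding solves_SCT_def .
    then have "A ` {0..<n} = \<Phi> \<longrightarrow> (\<forall>i<n. ?u i \<noteq> 0) \<longrightarrow> fair n ?a \<longrightarrow>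
        (\<exists>t. c \<le> card (set_mset (config n (exec n A ?u ?p ?a t))))"
      by (rule spec[of _ ?a, OF spec[of _ ?p, OF spec[of _ ?u, OF spec[of _ A]]]])
    then show ?thesis using AS u1 fair by blast
  qed
  then obtain t where t: "c \<le> card (set_mset (config n (exec n A ?u ?p ?a t)))" ..
  have h: "\<forall>i\<in>{0..<n}. \<forall>j\<in>{0..<n}. A i = A j \<longrightarrow> exec n A ?u ?p ?a t i = exec n A ?u ?p ?a t j"
    using same[of t] by (meson atLeastLessThan_iff)
  have "card (exec n A ?u ?p ?a t ` {0..<n}) \<le> card (A ` {0..<n})"
    by (rule card_coarser(1)[OF _ h]) simp
  then show False using t AS cm mc by (simp add: set_config)
qed

theorem theorem1:
  fixes n c :: nat
  assumes "1 \<le> n" and "1 \<le> c" and "c \<le> n"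
  shows "(\<exists>\<Phi>. is_algorithm n c \<Phi> \<and> solves_SCT n c \<Phi>)
       \<and> (\<forall>m \<Phi>. m < c \<longrightarrow> is_algorithm n m \<Phi> \<longrightarrow> \<not> solves_SCT n c \<Phi>)"
  using part1[OF assms] part2 by blast

end
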